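(* Let $G$ be a group acting on a set $X$, and let $\alpha\in\,]0,1]$. (1) Let $A\subset G$ and $Y\subset X$ be finite nonempty subsets such that $|A\cdot Y|\leq(2-\alpha)|Y|$. Then $A^{-1}A\subset\mathrm{Sym}_{\alpha}(Y)$. (2) Let $(\rho,V)$ be a linear representation of $G$ on a finite-dimensional vector space $V$ over a field $k$, let $A\subset G$ and let $W$ be a finite-dimensional $k$-subspace of $V$ such that $\dim\langle A\cdot W\rangle\leq(2-\alpha)\dim W$. Then $A^{-1}A\subset\mathrm{Sym}_{\alpha}(W)$.
   Context: $g\cdot x$ denotes the action of $g\in G$ on $x\in X$ (resp. on $v\in V$). For $A\subset G$, $Y\subset X$: $A\cdot Y=\{a\cdot y\mid a\in A,\ y\in Y\}$. For a subspace $W$: $A\cdot W$ denotes the set $\{a\cdot w\mid a\in A, w\in W\}$ and $\langle A\cdot W\rangle$ its $k$-linear span; $A^{-1}A=\{a^{-1}b\mid a,b\in A\}$. For a finite nonempty $Y\subset X$, $\mathrm{Sym}_{\alpha}(Y)=\{g\in G\mid |g\cdot Y\cap Y|\geq\alpha|Y|\}$. For a subspace $W$, $\mathrm{Sym}_{\alpha}(W)=\{g\in G\mid \dim(g\cdot W\cap W)\geq\alpha\dim W\}$. *)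

theory Defs
  imports Complex_Main "HOL-Algebra.Group_Action"
begin

definition invprod :: "('g, 'm) monoid_scheme \<Rightarrow> 'g set \<Rightarrow> 'g set" where
  "invprod G A = {inv\<^bsub>G\<^esub> a \<otimes>\<^bsub>G\<^esub> b | a b. a \<in> A \<and> b \<in> A}"

definition SymSet :: "('g, 'm) monoid_scheme \<Rightarrow> ('g \<Rightarrow> 'x \<Rightarrow> 'x) \<Rightarrow> real \<Rightarrow> 'x set \<Rightarrow> 'g set" where
  "SymSet G \<phi> \<alpha> Y = {g \<in> carrier G. real (card (\<phi> g ` Y \<inter> Y)) \<ge> \<alpha> * real (card Y)}"

definition SymSpace :: "('g, 'm) monoid_scheme \<Rightarrow> ('k::field \<Rightarrow> 'v::ab_group_add \<Rightarrow> 'v)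
    \<Rightarrow> ('g \<Rightarrow> 'v \<Rightarrow> 'v) \<Rightarrow> real \<Rightarrow> 'v set \<Rightarrow> 'g set" where
  "SymSpace G scale \<rho> \<alpha> W = {g \<in> carrier G.
      real (vector_space.dim scale (\<rho> g ` W \<inter> W)) \<ge> \<alpha> * real (vector_space.dim scale W)}"

definition linear_rep :: "('g, 'm) monoid_scheme \<Rightarrow> ('k::field \<Rightarrow> 'v::ab_group_add \<Rightarrow> 'v)
    \<Rightarrow> ('g \<Rightarrow> 'v \<Rightarrow> 'v) \<Rightarrow> bool" where
  "linear_rep G scale \<rho> \<longleftrightarrow> group_action G UNIV \<rho> \<and> (\<forall>g \<in> carrier G. Vector_Spaces.linear scale scale (\<rho> g))"

end

theory Submission
  imports Defs
begin

lemma ga_key: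
  assumes ga: "group_action G E \<phi>" and a: "a \<in> carrier G" and b: "b \<in> carrier G" and Y: "Y \<subseteq> E"
  shows "\<phi> a ` (\<phi> (inv\<^bsub>G\<^esub> a \<otimes>\<^bsub>G\<^esub> b) ` Y \<inter> Y) = \<phi> b ` Y \<inter> \<phi> a ` Y"
proof -
  interpret group_action G E \<phi> by fact
  interpret grpG: group G using group_hom group_hom.axioms(1) by blast
  have g: "inv\<^bsub>G\<^esub> a \<otimes>\<^bsub>G\<^esub> b \<in> carrier G" using a b by simp
  have sub: "\<phi> (inv\<^bsub>G\<^esub> a \<otimes>\<^bsub>G\<^esub> b) ` Y \<subseteq> E" using surj_prop[OF g] Y by blast
  have "\<phi> a ` (\<phi> (inv\<^bsub>G\<^esub> a \<otimes>\<^bsub>G\<^esub> b) ` Y \<inter> Y) = \<phi> a ` \<phi> (inv\<^bsub>G\<^esub> a \<otimes>\<^bsub>G\<^esub> b) ` Y \<inter> \<phi> a ` Y"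
    by (rule inj_on_image_Int[OF inj_prop[OF a] sub Y])
  moreover have "\<phi> a ` \<phi> (inv\<^bsub>G\<^esub> a \<otimes>\<^bsub>G\<^esub> b) ` Y = \<phi> b ` Y"
  proof -
    have "\<phi> a (\<phi> (inv\<^bsub>G\<^esub> a \<otimes>\<^bsub>G\<^esub> b) y) = \<phi> b y" if "y \<in> Y" for y
    proof -
      have "\<phi> a (\<phi> (inv\<^bsub>G\<^esub> a \<otimes>\<^bsub>G\<^esub> b) y) = \<phi> (a \<otimes>\<^bsub>G\<^esub> (inv\<^bsub>G\<^esub> a \<otimes>\<^bsub>G\<^esub> b)) y"
        using composition_rule[of y a "inv\<^bsub>G\<^esub> a \<otimes>\<^bsub>G\<^esub> b"] that Y a g by auto
      also have "a \<otimes>\<^bsub>G\<^esub> (inv\<^bsub>G\<^esub> a \<otimes>\<^bsub>G\<^esub> b) = b" using a b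
        by (simp add: grpG.m_assoc[symmetric])
      finally show ?thesis .
    qed
    then show ?thesis by (auto simp: image_image intro!: image_cong)
  qed
  ultimately show ?thesis by simp
qed

lemma ga_inv_mem:
  assumes "group G" "A \<subseteq> carrier G" "g \<in> invprod G A"
  obtains a b where "a \<in> A" "b \<in> A" "g = inv\<^bsub>G\<^esub> a \<otimes>\<^bsub>G\<^esub> b"
  using assms unfolding invprod_def by blast

lemma part1:
  assumes grp: "group G" and ga: "group_action G X \<phi>"
    and A: "A \<subseteq> carrier G" and Y: "Y \<subseteq> X" "finite Y"
    and h: "real (card {\<phi> a y | a y. a \<in> A \<and> y \<in> Y}) \<le> (2 - \<alpha>) * real (card Y)"
    and AF: "finite A"
  shows "invprod G A \<subseteq> SymSet G \<phi> \<alpha> Y"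
proof
  interpret group_action G X \<phi> by fact
  fix g assume "g \<in> invprod G A"
  then obtain a b where ab: "a \<in> A" "b \<in> A" "g = inv\<^bsub>G\<^esub> a \<otimes>\<^bsub>G\<^esub> b"
    using ga_inv_mem[OF grp A] by blast
  have ac: "a \<in> carrier G" and bc: "b \<in> carrier G" using ab A by auto
  have gc: "g \<in> carrier G" using ab ac bc grp by (simp add: group.subgroup_self subgroup.m_inv_closed subgroup.m_closed)
  have fin: "finite {\<phi> a y | a y. a \<in> A \<and> y \<in> Y}"
  proof -
    have "{\<phi> a y | a y. a \<in> A \<and> y \<in> Y} = (\<lambda>(a,y). \<phi> a y) ` (A \<times> Y)" by auto
    then show ?thesis using AF Y by simp
  qed
  have ca: "card (\<phi> a ` Y) = card Y" using card_image inj_on_subset[OF inj_prop[OF ac] Y(1)] by blast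
  have cb: "card (\<phi> b ` Y) = card Y" using card_image inj_on_subset[OF inj_prop[OF bc] Y(1)] by blast
  have un: "\<phi> b ` Y \<union> \<phi> a ` Y \<subseteq> {\<phi> a y | a y. a \<in> A \<and> y \<in> Y}" using ab by blast
  have "card (\<phi> b ` Y \<union> \<phi> a ` Y) \<le> card {\<phi> a y | a y. a \<in> A \<and> y \<in> Y}"
    by (rule card_mono[OF fin un])
  then have r1: "real (card (\<phi> b ` Y \<union> \<phi> a ` Y)) \<le> real (card {\<phi> a y | a y. a \<in> A \<and> y \<in> Y})" by simp
  moreover have "card (\<phi> b ` Y \<union> \<phi> a ` Y) + card (\<phi> b ` Y \<inter> \<phi> a ` Y) = card Y + card Y"
    using card_Un_Int[of "\<phi> b ` Y" "\<phi> a ` Y"] Y ca cb by simp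
  then have r2: "real (card (\<phi> b ` Y \<union> \<phi> a ` Y)) + real (card (\<phi> b ` Y \<inter> \<phi> a ` Y)) = 2 * real (card Y)"
    by (metis of_nat_add mult_2)
  moreover have "card (\<phi> g ` Y \<inter> Y) = card (\<phi> b ` Y \<inter> \<phi> a ` Y)"
  proof -
    have "card (\<phi> a ` (\<phi> g ` Y \<inter> Y)) = card (\<phi> g ` Y \<inter> Y)"
      apply (rule card_image)
      apply (rule inj_on_subset[OF inj_prop[OF ac]])
      using Y by blast
    then show ?thesis using ga_key[OF ga ac bc Y(1)] ab(3) by simp
  qed
  ultimately have "real (card (\<phi> g ` Y \<inter> Y)) \<ge> \<alpha> * real (card Y)" 
  proof -
    have "(2-\<alpha>)*real(card Y) = 2*real(card Y) - \<alpha>*real(card Y)" by algebra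
    then show ?thesis using h r1 r2 \<open>card (\<phi> g ` Y \<inter> Y) = card (\<phi> b ` Y \<inter> \<phi> a ` Y)\<close> by linarith
  qed
  then show "g \<in> SymSet G \<phi> \<alpha> Y" using gc unfolding SymSet_def by simp
qed

lemma part2:
  fixes scale :: "'k::field \<Rightarrow> 'v::ab_group_add \<Rightarrow> 'v"
  assumes grp: "group G" and fd: "finite_dimensional_vector_space scale B"
    and lr: "linear_rep G scale \<rho>" and A: "A \<subseteq> carrier G" and sub: "module.subspace scale W"
    and h: "real (vector_space.dim scale (module.span scale {\<rho> a w | a w. a \<in> A \<and> w \<in> W}))
            \<le> (2 - \<alpha>) * real (vector_space.dim scale W)"
  shows "invprod G A \<subseteq> SymSpace G scale \<rho> \<alpha> W"
proof
  interpret fd: finite_dimensional_vector_space scale B by fact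
  interpret pr: finite_dimensional_vector_space_pair_1 scale B scale
    by unfold_locales
  have ga: "group_action G UNIV \<rho>" and lin: "\<And>g. g \<in> carrier G \<Longrightarrow> Vector_Spaces.linear scale scale (\<rho> g)"
    using lr unfolding linear_rep_def by auto
  interpret group_action G UNIV \<rho> by fact
  have injg: "\<And>g. g \<in> carrier G \<Longrightarrow> inj (\<rho> g)" using inj_prop by blast
  have dimimg: "fd.dim (\<rho> g ` S) = fd.dim S" if "g \<in> carrier G" for g S
    by (rule pr.dim_image_eq[OF lin[OF that] inj_on_subset[OF injg[OF that] subset_UNIV]])
  have subimg: "fd.subspace (\<rho> g ` W)" if "g \<in> carrier G" for g
    by (rule pr.linear_subspace_image[OF lin[OF that] sub])
  fix g assume "g \<in> invprod G A"
  then obtain a b where ab: "a \<in> A" "b \<in> A" "g = inv\<^bsub>G\<^esub> a \<otimes>\<^bsub>G\<^esub> b"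
    using ga_inv_mem[OF grp A] by blast
  have ac: "a \<in> carrier G" and bc: "b \<in> carrier G" using ab A by auto
  have gc: "g \<in> carrier G" using ab ac bc grp by (simp add: group.subgroup_self subgroup.m_inv_closed subgroup.m_closed)
  let ?U = "\<rho> b ` W" and ?V = "\<rho> a ` W" and ?S = "{\<rho> a w | a w. a \<in> A \<and> w \<in> W}"
  have sums: "fd.dim {x + y |x y. x \<in> ?U \<and> y \<in> ?V} + fd.dim (?U \<inter> ?V) = fd.dim ?U + fd.dim ?V"
    by (rule fd.dim_sums_Int[OF subimg[OF bc] subimg[OF ac]])
  have "{x + y |x y. x \<in> ?U \<and> y \<in> ?V} = fd.span (?U \<union> ?V)"
    using fd.span_Un[of ?U ?V] fd.span_eq_iff[THEN iffD2, OF subimg[OF ac]] fd.span_eq_iff[THEN iffD2, OF subimg[OF bc]] by simp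
  then have "fd.dim {x + y |x y. x \<in> ?U \<and> y \<in> ?V} = fd.dim (?U \<union> ?V)" by simp
  also have "\<dots> \<le> fd.dim ?S" by (rule fd.dim_subset) (use ab in blast)
  also have "\<dots> = fd.dim (fd.span ?S)" by simp
  finally have d1: "fd.dim {x + y |x y. x \<in> ?U \<and> y \<in> ?V} \<le> fd.dim (fd.span ?S)" .
  have d2: "fd.dim (\<rho> g ` W \<inter> W) = fd.dim (?U \<inter> ?V)"
    using ga_key[OF ga ac bc, of W] ab(3) dimimg[OF ac, of "\<rho> g ` W \<inter> W"] by simp
  have "real (fd.dim (\<rho> g ` W \<inter> W)) \<ge> \<alpha> * real (fd.dim W)"
  proof -
    have n1: "fd.dim {x + y |x y. x \<in> ?U \<and> y \<in> ?V} + fd.dim (?U \<inter> ?V) = fd.dim W + fd.dim W"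
      using sums by (simp only: dimimg[OF ac] dimimg[OF bc])
    have r1: "real (fd.dim {x + y |x y. x \<in> ?U \<and> y \<in> ?V}) + real (fd.dim (?U \<inter> ?V)) = 2 * real (fd.dim W)"
      using arg_cong[OF n1, of real] by simp
    have r2: "real (fd.dim {x + y |x y. x \<in> ?U \<and> y \<in> ?V}) \<le> real (fd.dim (fd.span ?S))"
      using d1 by simp
    have r3: "real (fd.dim (\<rho> g ` W \<inter> W)) = real (fd.dim (?U \<inter> ?V))" using d2 by simp
    have "(2-\<alpha>)*real(fd.dim W) = 2*real(fd.dim W) - \<alpha>*real(fd.dim W)" by algebra
    then show ?thesis using r1 r2 r3 h by linarith
  qed
  then show "g \<in> SymSpace G scale \<rho> \<alpha> W" using gc unfolding SymSpace_def by simp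
qed

theorem mainTheorem1:
  fixes G :: "('g, 'm) monoid_scheme" and \<alpha> :: real
    and X :: "'x set" and \<phi> :: "'g \<Rightarrow> 'x \<Rightarrow> 'x"
    and scale :: "'k::field \<Rightarrow> 'v::ab_group_add \<Rightarrow> 'v" and \<rho> :: "'g \<Rightarrow> 'v \<Rightarrow> 'v"
  assumes grp: "group G"
    and alpha: "0 < \<alpha>" "\<alpha> \<le> 1"
  shows
    "(group_action G X \<phi> \<longrightarrow>
       (\<forall>A Y. A \<subseteq> carrier G \<and> finite A \<and> A \<noteq> {} \<and> Y \<subseteq> X \<and> finite Y \<and> Y \<noteq> {} \<and>
          real (card {\<phi> a y | a y. a \<in> A \<and> y \<in> Y}) \<le> (2 - \<alpha>) * real (card Y)
          \<longrightarrow> invprod G A \<subseteq> SymSet G \<phi> \<alpha> Y))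
     \<and>
     ((\<exists>B. finite_dimensional_vector_space scale B) \<and> linear_rep G scale \<rho> \<longrightarrow>
       (\<forall>A W. A \<subseteq> carrier G \<and> module.subspace scale W \<and>
          real (vector_space.dim scale (module.span scale {\<rho> a w | a w. a \<in> A \<and> w \<in> W}))
            \<le> (2 - \<alpha>) * real (vector_space.dim scale W)
          \<longrightarrow> invprod G A \<subseteq> SymSpace G scale \<rho> \<alpha> W))"
proof (intro conjI impI allI)
  assume "group_action G X \<phi>"
  then show "\<And>A Y. A \<subseteq> carrier G \<and> finite A \<and> A \<noteq> {} \<and> Y \<subseteq> X \<and> finite Y \<and> Y \<noteq> {} \<and>
          real (card {\<phi> a y | a y. a \<in> A \<and> y \<in> Y}) \<le> (2 - \<alpha>) * real (card Y)
          \<Longrightarrow> invprod G A \<subseteq> SymSet G \<phi> \<alpha> Y"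
    using part1[OF grp] by blast
next
  fix A W
  assume "(\<exists>B. finite_dimensional_vector_space scale B) \<and> linear_rep G scale \<rho>"
    and "A \<subseteq> carrier G \<and> module.subspace scale W \<and>
          real (vector_space.dim scale (module.span scale {\<rho> a w | a w. a \<in> A \<and> w \<in> W}))
            \<le> (2 - \<alpha>) * real (vector_space.dim scale W)"
  then show "invprod G A \<subseteq> SymSpace G scale \<rho> \<alpha> W"
    using part2[OF grp] by blast
qed

end
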